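(* Let $m,n\geq 2$ be integers. Then $c_{\mathrm{poly}}(mn)\geq c_{\mathrm{poly}}(n)+1$.
   Context: $S(\mathbb{Z}_n)$ is the set of bijections $\mathbb{Z}_n\to\mathbb{Z}_n$, and $S_{\mathrm{poly}}(\mathbb{Z}_n)$ is the set of $\pi\in S(\mathbb{Z}_n)$ for which there is a polynomial $f\in\mathbb{Z}_n[x]$ with $\pi(x)=f(x)$ for all $x\in\mathbb{Z}_n$. $\mathrm{cyc}(\pi)$ is the number of cycles (including fixed points) of $\pi$. Define $c_{\mathrm{poly}}(n)=\min_{\pi\in S_{\mathrm{poly}}(\mathbb{Z}_n)}\max_{k\in\mathbb{Z}_n}\mathrm{cyc}(x\mapsto\pi(x+k))$. *)

theory Defs
  imports "HOL-Computational_Algebra.Polynomial"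
begin

text \<open>Z_n is modelled by {0..<n} :: nat set. A permutation of Z_n is a function
  nat => nat that is a bijection of {0..<n} and the identity outside it.\<close>

definition perms_Zn :: "nat \<Rightarrow> (nat \<Rightarrow> nat) set" where
  "perms_Zn n = {\<pi>. bij_betw \<pi> {0..<n} {0..<n} \<and> (\<forall>x\<ge>n. \<pi> x = x)}"

text \<open>Polynomial permutations: induced by a polynomial over Z_n, i.e. by an integer
  polynomial with coefficients read modulo n.\<close>

definition perms_poly_Zn :: "nat \<Rightarrow> (nat \<Rightarrow> nat) set" where
  "perms_poly_Zn n = {\<pi> \<in> perms_Zn n.
     \<exists>f :: int poly. \<forall>x<n. int (\<pi> x) = poly f (int x) mod int n}"

text \<open>Number of cycles (including fixed points) of a map on {0..<n}: number of distinct orbits.\<close>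

definition orbit_of :: "(nat \<Rightarrow> nat) \<Rightarrow> nat \<Rightarrow> nat set" where
  "orbit_of \<sigma> x = {(\<sigma> ^^ j) x | j. True}"

definition cyc :: "nat \<Rightarrow> (nat \<Rightarrow> nat) \<Rightarrow> nat" where
  "cyc n \<sigma> = card (orbit_of \<sigma> ` {0..<n})"

definition c_poly :: "nat \<Rightarrow> nat" where
  "c_poly n = Min ((\<lambda>\<pi>. Max ((\<lambda>k. cyc n (\<lambda>x. \<pi> ((x + k) mod n))) ` {0..<n}))
                    ` perms_poly_Zn n)"

end

theory Submission
  imports Defs "HOL-Library.FuncSet"
begin

lemma finite_perms_Zn: "finite (perms_Zn N)"
proof -
  have "perms_Zn N \<subseteq> (\<lambda>g x. if x < N then g x else x) ` ({0..<N} \<rightarrow>\<^sub>E {0..<N})"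
  proof
    fix \<pi> assume a: "\<pi> \<in> perms_Zn N"
    hence b: "bij_betw \<pi> {0..<N} {0..<N}" "\<forall>x\<ge>N. \<pi> x = x" by (auto simp: perms_Zn_def)
    have "restrict \<pi> {0..<N} \<in> {0..<N} \<rightarrow>\<^sub>E {0..<N}"
      using b(1) by (auto simp: bij_betw_def)
    moreover have "\<pi> = (\<lambda>x. if x < N then restrict \<pi> {0..<N} x else x)"
      using b(2) by (auto simp: fun_eq_iff)
    ultimately show "\<pi> \<in> (\<lambda>g x. if x < N then g x else x) ` ({0..<N} \<rightarrow>\<^sub>E {0..<N})" by blast
  qed
  thus ?thesis by (rule finite_subset) (intro finite_imageI finite_PiE, auto)
qed

lemma finite_perms_poly: "finite (perms_poly_Zn N)"
  using finite_perms_Zn by (rule finite_subset[rotated]) (auto simp: perms_poly_Zn_def)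

lemma id_perms_poly: "(\<lambda>x. x) \<in> perms_poly_Zn N"
proof -
  have "\<forall>x<N. int x = poly [:0,1:] (int x) mod int N" by simp
  thus ?thesis unfolding perms_poly_Zn_def perms_Zn_def by (auto simp: bij_betw_def intro!: exI[of _ "[:0,1:]"])
qed

lemma cyc_embed:
  fixes \<sigma> \<tau> \<phi> :: "nat \<Rightarrow> nat"
  assumes inj: "inj \<phi>" and tau: "\<forall>y<n. \<tau> y < n" and phi: "\<forall>y<n. \<phi> y < N"
    and comm: "\<forall>y<n. \<sigma> (\<phi> y) = \<phi> (\<tau> y)" and z: "z < N" "z \<notin> range \<phi>"
  shows "cyc N \<sigma> \<ge> cyc n \<tau> + 1"
proof -
  have it: "(\<sigma> ^^ j) (\<phi> y) = \<phi> ((\<tau> ^^ j) y) \<and> (\<tau> ^^ j) y < n" if "y < n" for y j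
    using that by (induction j) (auto simp: comm tau)
  have orb: "orbit_of \<sigma> (\<phi> y) = \<phi> ` orbit_of \<tau> y" if "y < n" for y
    using it[OF that] unfolding orbit_of_def by auto
  define A where "A = orbit_of \<tau> ` {0..<n}"
  have finA: "finite A" by (simp add: A_def)
  have notin: "orbit_of \<sigma> z \<notin> (image \<phi>) ` A"
  proof
    assume "orbit_of \<sigma> z \<in> (image \<phi>) ` A"
    moreover have "z \<in> orbit_of \<sigma> z" unfolding orbit_of_def
      by (auto intro: exI[of _ 0])
    ultimately show False using z(2) by auto
  qed
  have injA: "inj_on (image \<phi>) A"
    using inj by (auto simp: inj_on_def inj_image_eq_iff)
  have sub: "insert (orbit_of \<sigma> z) ((image \<phi>) ` A) \<subseteq> orbit_of \<sigma> ` {0..<N}"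
  proof -
    have "(image \<phi>) ` A \<subseteq> orbit_of \<sigma> ` {0..<N}"
    proof
      fix Q assume "Q \<in> (image \<phi>) ` A"
      then obtain y where y: "y < n" "Q = \<phi> ` orbit_of \<tau> y" by (auto simp: A_def)
      hence "Q = orbit_of \<sigma> (\<phi> y)" using orb by simp
      thus "Q \<in> orbit_of \<sigma> ` {0..<N}" using phi y(1) by auto
    qed
    thus ?thesis using z(1) by auto
  qed
  have "card (insert (orbit_of \<sigma> z) ((image \<phi>) ` A)) = card A + 1"
    using notin card_image[OF injA] finA by simp
  moreover have "card (insert (orbit_of \<sigma> z) ((image \<phi>) ` A)) \<le> cyc N \<sigma>"
    unfolding cyc_def by (rule card_mono[OF _ sub]) simp
  ultimately show ?thesis by (simp add: cyc_def A_def)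
qed

lemma poly_scale:
  fixes f :: "int poly" and m :: int
  shows "\<exists>H. \<forall>y. poly f (m * y) = poly f 0 mod m + m * poly H y"
proof -
  obtain a g where fg: "f = pCons a g" by (cases f) auto
  define H where "H = [: a div m :] + pCons 0 (pcompose g [:0, m:])"
  have "poly f (m * y) = poly f 0 mod m + m * poly H y" for y
  proof -
    have "poly H y = a div m + y * poly g (m * y)"
      by (simp add: H_def poly_pcompose algebra_simps)
    hence "poly f 0 mod m + m * poly H y = (a mod m + m * (a div m)) + m * y * poly g (m * y)"
      by (simp add: fg algebra_simps)
    also have "\<dots> = a + m * y * poly g (m * y)" by simp
    finally show ?thesis by (simp add: fg algebra_simps)
  qed
  thus ?thesis by blast
qed

lemma aux_divmod:
  fixes c m n q :: int
  assumes "0 \<le> c" "c < m" "0 < n"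
  shows "((c + m * q) mod (m * n)) div m = q mod n"
proof -
  have m0: "0 < m" using assms by simp
  have e: "c + m * q = (c + m * (q mod n)) + (m * n) * (q div n)"
    by (simp add: algebra_simps) (metis add.commute distrib_left mult.assoc mult_div_mod_eq)
  have lo: "0 \<le> c + m * (q mod n)" using assms m0 by simp
  have "q mod n \<le> n - 1" using assms by simp
  hence "m * (q mod n) \<le> m * (n - 1)" using m0 by (simp add: mult_left_mono)
  hence hi: "c + m * (q mod n) < m * n" using assms by (simp add: algebra_simps)
  have "(c + m * q) mod (m * n) = c + m * (q mod n)"
    unfolding e using lo hi by simp
  moreover have "(c + m * (q mod n)) div m = q mod n"
    using assms m0 by simp
  ultimately show ?thesis by simp
qed

theorem lemma5p2:
  fixes m n :: nat
  assumes "m \<ge> 2" and "n \<ge> 2"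
  shows "c_poly (m * n) \<ge> c_poly n + 1"
proof -
  have m0: "m > 0" and n0: "n > 0" using assms by auto
  have N0: "m * n > 0" using m0 n0 by simp
  have "c_poly (m * n) \<in> (\<lambda>\<pi>. Max ((\<lambda>k. cyc (m * n) (\<lambda>x. \<pi> ((x + k) mod (m * n)))) ` {0..<m * n}))
                    ` perms_poly_Zn (m * n)"
    unfolding c_poly_def
    by (rule Min_in) (use finite_perms_poly id_perms_poly in auto)
  then obtain \<pi> where pi: "\<pi> \<in> perms_poly_Zn (m * n)"
    and cp: "c_poly (m * n) = Max ((\<lambda>k. cyc (m * n) (\<lambda>x. \<pi> ((x + k) mod (m * n)))) ` {0..<m * n})"
    by auto
  from pi obtain f :: "int poly" where f: "\<forall>x<m * n. int (\<pi> x) = poly f (int x) mod int (m * n)"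
    and bij: "bij_betw \<pi> {0..<m * n} {0..<m * n}"
    by (auto simp: perms_poly_Zn_def perms_Zn_def)
  obtain H where H: "\<forall>y. poly f (int m * y) = poly f 0 mod int m + int m * poly H y"
    using poly_scale by blast
  define c0 where "c0 = \<pi> 0 mod m"
  define h where "h = (\<lambda>y. if y < n then \<pi> (m * y) div m else y)"
  have pimn: "\<pi> x < m * n" if "x < m * n" for x
    using bij that by (auto simp: bij_betw_def)
  have piy: "\<pi> (m * y) mod m = c0" if "y < n" for y
  proof -
    have my: "m * y < m * n" using that m0 by simp
    have "int (\<pi> (m * y) mod m) = int (\<pi> (m * y)) mod int m" by (simp add: of_nat_mod)
    also have "\<dots> = (poly f (int m * int y) mod (int m * int n)) mod int m"
      using f my by simp
    also have "\<dots> = poly f (int m * int y) mod int m"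
      by (simp add: mod_mod_cancel)
    also have "\<dots> = poly f 0 mod int m" using H by simp
    finally have 1: "int (\<pi> (m * y) mod m) = poly f 0 mod int m" .
    have "int (\<pi> 0 mod m) = int (\<pi> 0) mod int m" by (simp add: of_nat_mod)
    also have "\<dots> = (poly f 0 mod (int m * int n)) mod int m"
      using f N0 by simp
    also have "\<dots> = poly f 0 mod int m" by (simp add: mod_mod_cancel)
    finally have 2: "int (\<pi> 0 mod m) = poly f 0 mod int m" .
    from 1 2 show ?thesis unfolding c0_def by simp
  qed
  have piy2: "\<pi> (m * y) = m * h y + c0" if "y < n" for y
    using piy[OF that] that div_mult_mod_eq[of "\<pi> (m * y)" m] unfolding h_def
    by (simp add: mult.commute)
  have c0m: "c0 < m" unfolding c0_def using m0 by simp
  have hlt: "h y < n" if "y < n" for y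
  proof -
    have "\<pi> (m * y) < m * n" using pimn that m0 by simp
    thus ?thesis using that unfolding h_def by (simp add: less_mult_imp_div_less mult.commute)
  qed
  have hinj: "inj_on h {0..<n}"
  proof (rule inj_onI)
    fix a b assume ab: "a \<in> {0..<n}" "b \<in> {0..<n}" "h a = h b"
    hence "\<pi> (m * a) = \<pi> (m * b)" using piy2 by simp
    moreover have "m * a \<in> {0..<m * n}" "m * b \<in> {0..<m * n}" using ab m0 by auto
    ultimately have "m * a = m * b" using bij_betw_imp_inj_on[OF bij] inj_onD by metis
    thus "a = b" using m0 by simp
  qed
  have himg: "h ` {0..<n} \<subseteq> {0..<n}" using hlt by auto
  have "h ` {0..<n} = {0..<n}" by (rule endo_inj_surj[OF _ himg hinj]) simp
  hence hbij: "bij_betw h {0..<n} {0..<n}"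
    unfolding bij_betw_def using hinj by simp
  have hpoly: "\<forall>y<n. int (h y) = poly H (int y) mod int n"
  proof (intro allI impI)
    fix y assume y: "y < n"
    have my: "m * y < m * n" using y m0 by simp
    have "int (h y) = int (\<pi> (m * y)) div int m" using y by (simp add: h_def zdiv_int)
    also have "\<dots> = (poly f (int m * int y) mod (int m * int n)) div int m"
      using f my by simp
    also have "\<dots> = ((poly f 0 mod int m + int m * poly H (int y)) mod (int m * int n)) div int m"
      using H by simp
    also have "\<dots> = poly H (int y) mod int n"
      by (rule aux_divmod) (use m0 n0 in auto)
    finally show "int (h y) = poly H (int y) mod int n" .
  qed
  have hmem: "h \<in> perms_poly_Zn n"
    unfolding perms_poly_Zn_def perms_Zn_def using hbij hpoly by (auto simp: h_def)
  have "c_poly n \<le> Max ((\<lambda>k. cyc n (\<lambda>x. h ((x + k) mod n))) ` {0..<n})"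
    unfolding c_poly_def
    by (rule Min_le) (use finite_perms_poly hmem in auto)
  moreover have "Max ((\<lambda>k. cyc n (\<lambda>x. h ((x + k) mod n))) ` {0..<n})
      \<in> (\<lambda>k. cyc n (\<lambda>x. h ((x + k) mod n))) ` {0..<n}"
    by (rule Max_in) (use n0 in auto)
  then obtain s where s: "s < n"
    and sM: "Max ((\<lambda>k. cyc n (\<lambda>x. h ((x + k) mod n))) ` {0..<n}) = cyc n (\<lambda>x. h ((x + s) mod n))"
    by auto
  define k where "k = (m * s + m * n - c0) mod (m * n)"
  have kN: "k < m * n" unfolding k_def using N0 by simp
  have shift: "(m * y + c0 + k) mod (m * n) = m * ((y + s) mod n)" for y
  proof -
    have "m \<le> m * n" using n0 by simp
    hence "c0 \<le> m * s + m * n" using c0m by linarith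
    hence e: "m * y + c0 + (m * s + m * n - c0) = m * (y + s) + m * n" by (simp add: add_mult_distrib2)
    have "(m * y + c0 + k) mod (m * n) = (m * y + c0 + (m * s + m * n - c0)) mod (m * n)"
      unfolding k_def by (rule mod_add_right_eq)
    also have "\<dots> = (m * (y + s) + m * n) mod (m * n)" by (simp only: e)
    also have "\<dots> = (m * (y + s)) mod (m * n)" by simp
    also have "\<dots> = m * ((y + s) mod n)" by (rule mult_mod_right[symmetric])
    finally show ?thesis .
  qed
  have "cyc (m * n) (\<lambda>x. \<pi> ((x + k) mod (m * n))) \<ge> cyc n (\<lambda>x. h ((x + s) mod n)) + 1"
  proof (rule cyc_embed[where \<phi> = "\<lambda>y. m * y + c0" and z = "(c0 + 1) mod m"])
    show "inj (\<lambda>y. m * y + c0)" using m0 by (auto simp: inj_on_def)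
    show "\<forall>y<n. h ((y + s) mod n) < n" using hlt n0 by simp
    show "\<forall>y<n. m * y + c0 < m * n"
    proof (intro allI impI)
      fix y assume "y < n"
      hence "y + 1 \<le> n" by simp
      hence "m * (y + 1) \<le> m * n" by (rule mult_le_mono2)
      thus "m * y + c0 < m * n" using c0m by simp
    qed
    show "\<forall>y<n. \<pi> ((m * y + c0 + k) mod (m * n)) = m * h ((y + s) mod n) + c0"
      using shift piy2 n0 by simp
    show "(c0 + 1) mod m < m * n"
    proof -
      have "(c0 + 1) mod m < m" using m0 by simp
      moreover have "m \<le> m * n" using n0 by simp
      ultimately show ?thesis by linarith
    qed
    show "(c0 + 1) mod m \<notin> range (\<lambda>y. m * y + c0)"
    proof
      assume "(c0 + 1) mod m \<in> range (\<lambda>y. m * y + c0)"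
      then obtain y where "(c0 + 1) mod m = m * y + c0" by auto
      hence "(c0 + 1) mod m mod m = c0" using c0m by simp
      hence eq: "(c0 + 1) mod m = c0" by simp
      show False
      proof (cases "c0 + 1 < m")
        case True thus False using eq by simp
      next
        case False
        hence m1: "c0 + 1 = m" using c0m by simp
        hence "c0 = 0" using eq by simp
        thus False using m1 assms(1) by simp
      qed
    qed
  qed
  moreover have "cyc (m * n) (\<lambda>x. \<pi> ((x + k) mod (m * n)))
      \<le> Max ((\<lambda>k. cyc (m * n) (\<lambda>x. \<pi> ((x + k) mod (m * n)))) ` {0..<m * n})"
    by (rule Max_ge) (use kN in auto)
  ultimately show ?thesis using cp sM by linarith
qed

end
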